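(* For all integers $l\ge1$ and $n\ge2$, $$\beth(2,l,n)\le \frac{(2l-1)(n-1)(n-2)}{2}.$$
   Context: Fix a totally ordered alphabet $a_1<\dots<a_l$. A word is primitive if it is not of the form $v^k$ with $k>1$. A system of type $X(t,l)$ is a finite sequence $(w_1,\dots,w_N)$ of primitive words of length $t$ over this alphabet, no two of which are cyclic shifts of each other. For $1\le i\le N$, $1\le j\le t$, let $w(i,j)$ be the cyclic shift of $w_i$ beginning with its $j$-th letter. Define a strict partial order on the pairs $(i,j)$ by $(i_1,j_1)\prec(i_2,j_2)$ iff $i_1<i_2$ and $w(i_1,j_1)$ is lexicographically smaller than $w(i_2,j_2)$. The system is $n$-light if there are no $n$ pairwise $\prec$-incomparable pairs. $\beth(t,l,n)$ denotes the largest $N$ of an $n$-light system of type $X(t,l)$. *)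

theory Defs
  imports Complex_Main
begin

text \<open>Alphabet a_1 < ... < a_l is modelled as the letters 0 < 1 < ... < l-1 (type nat).
Words are lists; the j-th letter is 0-indexed.\<close>

definition primitive :: "nat list \<Rightarrow> bool" where
  "primitive w \<longleftrightarrow> \<not> (\<exists>v k. k > 1 \<and> w = concat (replicate k v))"

definition cyc_shift :: "nat list \<Rightarrow> nat list \<Rightarrow> bool" where
  "cyc_shift u v \<longleftrightarrow> (\<exists>k. v = rotate k u)"

definition system_X :: "nat \<Rightarrow> nat \<Rightarrow> nat list list \<Rightarrow> bool" where
  "system_X t l ws \<longleftrightarrow>
     (\<forall>i < length ws. length (ws ! i) = t \<and> set (ws ! i) \<subseteq> {..<l} \<and> primitive (ws ! i)) \<and>
     (\<forall>i < length ws. \<forall>j < length ws. i \<noteq> j \<longrightarrow> \<not> cyc_shift (ws ! i) (ws ! j))"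

definition wshift :: "nat list list \<Rightarrow> nat \<Rightarrow> nat \<Rightarrow> nat list" where
  "wshift ws i j = rotate j (ws ! i)"

definition prec :: "nat list list \<Rightarrow> nat \<times> nat \<Rightarrow> nat \<times> nat \<Rightarrow> bool" where
  "prec ws p q \<longleftrightarrow> fst p < fst q \<and> ord_class.lexordp (wshift ws (fst p) (snd p)) (wshift ws (fst q) (snd q))"

definition pairs :: "nat \<Rightarrow> nat list list \<Rightarrow> (nat \<times> nat) set" where
  "pairs t ws = {..<length ws} \<times> {..<t}"

definition n_light :: "nat \<Rightarrow> nat \<Rightarrow> nat list list \<Rightarrow> bool" where
  "n_light t n ws \<longleftrightarrow>
     \<not> (\<exists>S \<subseteq> pairs t ws. card S = n \<and> (\<forall>p\<in>S. \<forall>q\<in>S. \<not> prec ws p q))"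

definition beth :: "nat \<Rightarrow> nat \<Rightarrow> nat \<Rightarrow> nat" where
  "beth t l n = Max {N. \<exists>ws. length ws = N \<and> system_X t l ws \<and> n_light t n ws}"

end

theory Submission
  imports Defs
begin

definition antiS :: "nat list list \<Rightarrow> (nat \<times> nat) set \<Rightarrow> bool" where
  "antiS ws S \<longleftrightarrow> (\<forall>p\<in>S. \<forall>q\<in>S. \<not> prec ws p q)"

definition cp :: "nat list list \<Rightarrow> nat \<times> nat \<Rightarrow> nat \<times> nat \<Rightarrow> bool" where
  "cp ws p q \<longleftrightarrow> fst p \<le> fst q \<and> ord_class.lexordp (wshift ws (fst q) (snd q)) (wshift ws (fst p) (snd p))"

definition Hset :: "nat list list \<Rightarrow> nat \<times> nat \<Rightarrow> (nat \<times> nat) set set" where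
  "Hset ws p = {S. S \<subseteq> pairs 2 ws \<and> antiS ws S \<and> p \<in> S \<and> (\<forall>q\<in>S. q = p \<or> cp ws q p)}"

definition H :: "nat list list \<Rightarrow> nat \<times> nat \<Rightarrow> nat" where
  "H ws p = Max (card ` Hset ws p)"

lemma word_shape:
  assumes "system_X 2 l ws" "i < length ws"
  obtains c d where "ws ! i = [c, d]" "c \<noteq> d" "c < l" "d < l"
proof -
  have L: "length (ws ! i) = 2" and S: "set (ws ! i) \<subseteq> {..<l}" and P: "primitive (ws ! i)"
    using assms unfolding system_X_def by auto
  obtain c d where w: "ws ! i = [c, d]" using L
    by (cases "ws ! i"; cases "tl (ws ! i)"; auto)
  have "c \<noteq> d"
  proof
    assume "c = d"
    hence "ws ! i = concat (replicate 2 [c])" using w by (simp add: numeral_2_eq_2)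
    hence "\<exists>v k. k > (1::nat) \<and> ws ! i = concat (replicate k v)" by (intro exI[of _ "[c]"] exI[of _ 2]) auto
    thus False using P unfolding primitive_def by blast
  qed
  moreover have "c < l" "d < l" using S w by auto
  ultimately show ?thesis using that w by blast
qed

lemma noshift:
  assumes "system_X 2 l ws" "i < length ws" "i' < length ws" "i \<noteq> i'" "ws ! i = [c, d]"
  shows "ws ! i' \<noteq> [c, d]" "ws ! i' \<noteq> [d, c]"
proof -
  have "\<not> cyc_shift (ws ! i) (ws ! i')" using assms unfolding system_X_def by auto
  hence "ws ! i' \<noteq> rotate 0 (ws ! i)" "ws ! i' \<noteq> rotate 1 (ws ! i)"
    unfolding cyc_shift_def by blast+
  thus "ws ! i' \<noteq> [c, d]" "ws ! i' \<noteq> [d, c]" using assms(5) by auto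
qed

lemma pairs_mem: "p \<in> pairs 2 ws \<longleftrightarrow> fst p < length ws \<and> snd p < 2"
  unfolding pairs_def by (cases p) auto

lemma wshift_vals:
  assumes "ws ! i = [c, d]"
  shows "wshift ws i 0 = [c, d]" "wshift ws i 1 = [d, c]"
  using assms unfolding wshift_def by auto

lemma distinct_vals:
  assumes "system_X 2 l ws" "p \<in> pairs 2 ws" "q \<in> pairs 2 ws" "p \<noteq> q"
  shows "wshift ws (fst p) (snd p) \<noteq> wshift ws (fst q) (snd q)"
proof -
  obtain i j i' j' where p: "p = (i, j)" and q: "q = (i', j')" by (cases p, cases q)
  have ij: "i < length ws" "j < 2" "i' < length ws" "j' < 2" using assms(2,3) p q
    by (auto simp: pairs_mem)
  obtain c d where w: "ws ! i = [c, d]" "c \<noteq> d" using word_shape[OF assms(1) ij(1)] by blast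
  obtain c' d' where w': "ws ! i' = [c', d']" using word_shape[OF assms(1) ij(3)] by blast
  have j: "j = 0 \<or> j = 1" "j' = 0 \<or> j' = 1" using ij by auto
  show ?thesis
  proof (cases "i = i'")
    case True
    then have "j \<noteq> j'" using assms(4) p q by auto
    then show ?thesis using j w True p q wshift_vals[OF w(1)] by auto
  next
    case False
    have "ws ! i' \<noteq> [c, d]" "ws ! i' \<noteq> [d, c]" using noshift[OF assms(1) ij(1) ij(3) False w(1)] by auto
    then show ?thesis using j w w' p q wshift_vals[OF w(1)] wshift_vals[OF w'(1)] by auto
  qed
qed

lemma cp_not_prec: "cp ws p q \<Longrightarrow> \<not> prec ws p q \<and> \<not> prec ws q p"
  unfolding cp_def prec_def using lexordp_antisym by fastforce

lemma cp_trans: "cp ws p q \<Longrightarrow> cp ws q r \<Longrightarrow> cp ws p r"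
  unfolding cp_def using lexordp_trans by fastforce

lemma cp_irrefl: "\<not> cp ws p p"
  unfolding cp_def using lexordp_irreflexive' by fastforce

lemma total:
  assumes "system_X 2 l ws" "p \<in> pairs 2 ws" "q \<in> pairs 2 ws" "p \<noteq> q"
  shows "prec ws p q \<or> prec ws q p \<or> cp ws p q \<or> cp ws q p"
  using distinct_vals[OF assms] lexordp_linear[of "wshift ws (fst p) (snd p)" "wshift ws (fst q) (snd q)"]
  unfolding prec_def cp_def by auto

lemma Hset_fin: "finite (Hset ws p)"
proof -
  have "Hset ws p \<subseteq> Pow (pairs 2 ws)" unfolding Hset_def by auto
  moreover have "finite (pairs 2 ws)" unfolding pairs_def by auto
  ultimately show ?thesis using finite_subset by (simp add: finite_subset)
qed

lemma Hset_single: "p \<in> pairs 2 ws \<Longrightarrow> {p} \<in> Hset ws p"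
  unfolding Hset_def antiS_def prec_def by auto

lemma H_ge1: "p \<in> pairs 2 ws \<Longrightarrow> 1 \<le> H ws p"
proof -
  assume "p \<in> pairs 2 ws"
  hence "card {p} \<in> card ` Hset ws p" using Hset_single[of p ws] by blast
  hence "card {p} \<le> H ws p" unfolding H_def using Hset_fin[of ws p] by (intro Max_ge) auto
  thus ?thesis by simp
qed

lemma H_le:
  assumes "n_light 2 n ws" "p \<in> pairs 2 ws"
  shows "H ws p \<le> n - 1"
proof -
  have "card S \<le> n - 1" if S: "S \<in> Hset ws p" for S
  proof (rule ccontr)
    assume "\<not> card S \<le> n - 1"
    hence "n \<le> card S" by auto
    then obtain T where T: "T \<subseteq> S" "card T = n" by (meson obtain_subset_with_card_n)
    have "T \<subseteq> pairs 2 ws" "\<forall>p\<in>T. \<forall>q\<in>T. \<not> prec ws p q"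
      using S T unfolding Hset_def antiS_def by blast+
    thus False using assms(1) T unfolding n_light_def by blast
  qed
  moreover have "Hset ws p \<noteq> {}" using Hset_single[OF assms(2)] by auto
  ultimately show ?thesis unfolding H_def using Hset_fin[of ws p] by auto
qed

lemma H_mono:
  assumes "p \<in> pairs 2 ws" "q \<in> pairs 2 ws" "cp ws q p"
  shows "H ws q < H ws p"
proof -
  have ne: "Hset ws q \<noteq> {}" using Hset_single[OF assms(2)] by auto
  have "H ws q \<in> card ` Hset ws q" unfolding H_def using Hset_fin[of ws q] ne by (intro Max_in) auto
  then obtain S where S: "S \<in> Hset ws q" "card S = H ws q" by auto
  have Sp: "S \<subseteq> pairs 2 ws" "antiS ws S" "q \<in> S" "\<forall>r\<in>S. r = q \<or> cp ws r q"
    using S(1) unfolding Hset_def by auto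
  have rp: "cp ws r p" if "r \<in> S" for r using Sp(4) that assms(3) by (metis cp_trans)
  have pS: "p \<notin> S" using rp cp_irrefl by blast
  have "insert p S \<in> Hset ws p"
    unfolding Hset_def antiS_def using Sp rp assms(1) cp_not_prec
    by (auto simp: antiS_def prec_def)
  hence "card (insert p S) \<le> H ws p" unfolding H_def using Hset_fin[of ws p] by (intro Max_ge) auto
  moreover have "finite S" using Sp(1) unfolding pairs_def by (meson finite_SigmaI finite_lessThan finite_subset)
  ultimately show ?thesis using pS S(2) by auto
qed

lemma H_eq_prec:
  assumes "system_X 2 l ws" "p \<in> pairs 2 ws" "q \<in> pairs 2 ws" "H ws p = H ws q" "fst p < fst q"
  shows "prec ws p q"
proof -
  have "p \<noteq> q" using assms(5) by auto
  from total[OF assms(1-3) this] show ?thesis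
    using H_mono[OF assms(2,3)] H_mono[OF assms(3,2)] assms(4,5)
    unfolding prec_def cp_def by auto
qed

lemma sum_lemma:
  fixes a b e f :: nat
  assumes "ord_class.lexordp [a, b] [e, f]" "ord_class.lexordp [b, a] [f, e]"
  shows "a + b < e + f"
  using assms by auto

lemma cardA: "card {(x, y). x < y \<and> y < (m::nat)} * 2 = m * (m - 1)"
proof (induction m)
  case 0
  then show ?case by simp
next
  case (Suc m)
  have eq: "{(x, y). x < y \<and> y < Suc m} = {(x, y). x < y \<and> y < m} \<union> (\<lambda>x. (x, m)) ` {..<m}"
    by auto
  have fin: "finite {(x, y). x < y \<and> (y::nat) < m}"
    by (rule finite_subset[of _ "{..<m} \<times> {..<m}"]) auto
  have "card {(x, y). x < y \<and> y < Suc m} = card {(x, y). x < y \<and> y < m} + card ((\<lambda>x. (x, m)) ` {..<m})"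
    unfolding eq by (rule card_Un_disjoint) (use fin in auto)
  moreover have "card ((\<lambda>x. (x, m)) ` {..<m}) = m" by (subst card_image) (auto simp: inj_on_def)
  ultimately show ?case using Suc.IH by (cases m) (auto simp: algebra_simps)
qed

lemma main_bound:
  assumes sys: "system_X 2 l ws" and nl: "n_light 2 n ws" and n2: "n \<ge> 2" and l1: "l \<ge> 1"
  shows "2 * length ws \<le> (2 * l - 1) * (n - 1) * (n - 2)"
proof -
  define N where "N = length ws"
  define F where "F i = ((min (H ws (i,0)) (H ws (i,1)) - 1, max (H ws (i,0)) (H ws (i,1)) - 1), sum_list (ws ! i))" for i
  define A where "A = {(x, y). x < y \<and> y < n - 1}"
  define T where "T = A \<times> {..2 * l - 2}"
  have p0: "(i, 0) \<in> pairs 2 ws" "(i, 1) \<in> pairs 2 ws" if "i < N" for i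
    using that by (auto simp: pairs_mem N_def)
  have Hne: "H ws (i,0) \<noteq> H ws (i,1)" if "i < N" for i
  proof -
    have "(i,0::nat) \<noteq> (i,1)" by auto
    from total[OF sys p0[OF that] this] show ?thesis
      using H_mono[OF p0[OF that]] H_mono[OF p0(2)[OF that] p0(1)[OF that]]
      by (auto simp: prec_def)
  qed
  have inT: "F i \<in> T" if iN: "i < N" for i
  proof -
    obtain c d where w: "ws ! i = [c, d]" "c < l" "d < l" using word_shape[OF sys, of i] iN N_def by blast
    have "1 \<le> H ws (i,0)" "1 \<le> H ws (i,1)" using H_ge1 p0 that by blast+
    moreover have "H ws (i,0) \<le> n - 1" "H ws (i,1) \<le> n - 1" using H_le[OF nl] p0 that by blast+
    moreover note Hne[OF that]
    ultimately show ?thesis unfolding F_def T_def A_def using w n2 by auto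
  qed
  have inj: "inj_on F {..<N}"
  proof (rule inj_onI)
    have key: "False" if ii: "i < N" "i' < N" "i < i'" "F i = F i'" for i i'
    proof -
      obtain c d where w: "ws ! i = [c, d]" using word_shape[OF sys, of i] ii N_def by blast
      obtain c' d' where w': "ws ! i' = [c', d']" using word_shape[OF sys, of i'] ii N_def by blast
      have s: "c + d = c' + d'" using ii(4) w w' unfolding F_def by simp
      have ge: "1 \<le> H ws (i,0)" "1 \<le> H ws (i,1)" "1 \<le> H ws (i',0)" "1 \<le> H ws (i',1)"
        using H_ge1 p0 ii by blast+
      have m: "min (H ws (i,0)) (H ws (i,1)) = min (H ws (i',0)) (H ws (i',1))"
              "max (H ws (i,0)) (H ws (i,1)) = max (H ws (i',0)) (H ws (i',1))"
        using ii(4) ge unfolding F_def by (auto simp: min_def max_def split: if_splits)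
      have cases: "(H ws (i,0) = H ws (i',0) \<and> H ws (i,1) = H ws (i',1)) \<or>
                   (H ws (i,0) = H ws (i',1) \<and> H ws (i,1) = H ws (i',0))"
        using m Hne[OF ii(1)] Hne[OF ii(2)] by (auto simp: min_def max_def split: if_splits)
      thus False
      proof
        assume h: "H ws (i,0) = H ws (i',0) \<and> H ws (i,1) = H ws (i',1)"
        have "prec ws (i,0) (i',0)" "prec ws (i,1) (i',1)"
          using H_eq_prec[OF sys] p0 ii h by auto
        hence "ord_class.lexordp [c, d] [c', d']" "ord_class.lexordp [d, c] [d', c']"
          unfolding prec_def using wshift_vals[OF w] wshift_vals[OF w'] by auto
        from sum_lemma[OF this] s show False by simp
      next
        assume h: "H ws (i,0) = H ws (i',1) \<and> H ws (i,1) = H ws (i',0)"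
        have "prec ws (i,0) (i',1)" "prec ws (i,1) (i',0)"
          using H_eq_prec[OF sys] p0 ii h by auto
        hence "ord_class.lexordp [c, d] [d', c']" "ord_class.lexordp [d, c] [c', d']"
          unfolding prec_def using wshift_vals[OF w] wshift_vals[OF w'] by auto
        from sum_lemma[OF this] s show False by simp
      qed
    qed
    fix i i' assume "i \<in> {..<N}" "i' \<in> {..<N}" "F i = F i'"
    thus "i = i'" using key[of i i'] key[of i' i] by (cases "i < i'"; cases "i' < i") auto
  qed
  have finA: "finite A" unfolding A_def
    by (rule finite_subset[of _ "{..<n-1} \<times> {..<n-1}"]) auto
  have "N = card (F ` {..<N})" using inj by (simp add: card_image)
  also have "\<dots> \<le> card T"
  proof (rule card_mono)
    show "finite T" using finA unfolding T_def by auto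
    show "F ` {..<N} \<subseteq> T" using inT by blast
  qed
  also have "card T = card A * (2 * l - 1)"
  proof -
    have "card {..2 * l - 2} = 2 * l - 1"
      using l1 by simp
    thus ?thesis unfolding T_def by (simp add: card_cartesian_product)
  qed
  finally have "2 * N \<le> card A * 2 * (2 * l - 1)" by simp
  also have "card A * 2 = (n - 1) * (n - 2)" unfolding A_def using cardA[of "n - 1"]
    by (simp add: diff_diff_left numeral_2_eq_2)
  finally show ?thesis unfolding N_def by (simp only: mult.commute mult.left_commute)
qed

theorem mainTheorem16:
  fixes l n :: nat
  assumes "l \<ge> 1" and "n \<ge> 2"
  shows "real (beth 2 l n) \<le> real ((2 * l - 1) * (n - 1) * (n - 2)) / 2"
proof -
  define B where "B = (2 * l - 1) * (n - 1) * (n - 2)"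
  define M where "M = {N. \<exists>ws. length ws = N \<and> system_X 2 l ws \<and> n_light 2 n ws}"
  have bd: "2 * N \<le> B" if "N \<in> M" for N
    using that main_bound[OF _ _ assms(2) assms(1)] unfolding M_def B_def by blast
  have fin: "finite M" by (rule finite_subset[of _ "{..B}"]) (use bd in force)+
  have "0 \<in> M" unfolding M_def system_X_def n_light_def pairs_def using assms(2)
    by (rule_tac CollectI, rule_tac x="[]" in exI) (auto simp: subset_empty)
  hence "beth 2 l n \<in> M" unfolding beth_def M_def[symmetric] using fin by (intro Max_in) auto
  hence "2 * beth 2 l n \<le> B" by (rule bd)
  hence "real (2 * beth 2 l n) \<le> real B" by (simp only: of_nat_le_iff)
  thus ?thesis unfolding B_def by simp
qed

end
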